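(* Let $S_1,S_2\subseteq\mathbb{N}$ be finite nonempty collision-free sets and let $I\subseteq(0,\infty)$ be an open interval. Then $z_{S_1+S_2}^I\leq z_{S_1}^I+z_{S_2}^I$.
   Context: $\mathbb{N}=\{0,1,2,\dots\}$. For a finite nonempty set $S=\{e_1,\dots,e_k\}\subseteq\mathbb{N}$ (distinct elements), let $f_S(x)=\sum_{i=1}^k a_i x^{e_i}$, where $a_1,\dots,a_k$ are independent standard normal random variables. For an open interval $I\subseteq(0,\infty)$, $z_S^I$ denotes the expected number of zeros of $f_S$ in $I$. For $A,B\subseteq\mathbb{N}$, $A+B:=\{a+b: a\in A,b\in B\}$; $A$ and $B$ are collision-free if $|A+B|=|A|\cdot|B|$, i.e. all sums $a+b$ ($a\in A$, $b\in B$) are distinct. *)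

theory Defs
  imports "HOL-Probability.Probability"
begin

definition sumset :: "nat set \<Rightarrow> nat set \<Rightarrow> nat set" where
  "sumset A B = {a + b | a b. a \<in> A \<and> b \<in> B}"

definition collision_free :: "nat set \<Rightarrow> nat set \<Rightarrow> bool" where
  "collision_free A B \<longleftrightarrow> card (sumset A B) = card A * card B"

text \<open>The random polynomial f_S with coefficient vector a (only the values a e for e in S matter).\<close>
definition fpoly :: "nat set \<Rightarrow> (nat \<Rightarrow> real) \<Rightarrow> real \<Rightarrow> real" where
  "fpoly S a x = (\<Sum>e\<in>S. a e * x ^ e)"

text \<open>Number of zeros of f_S(a,.) in I, as an extended nonnegative real (infinite if infinitely many).\<close>
definition num_zeros :: "nat set \<Rightarrow> real set \<Rightarrow> (nat \<Rightarrow> real) \<Rightarrow> ennreal" where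
  "num_zeros S I a = emeasure (count_space UNIV) {x \<in> I. fpoly S a x = 0}"

definition coeff_space :: "nat set \<Rightarrow> (nat \<Rightarrow> real) measure" where
  "coeff_space S = (\<Pi>\<^sub>M e\<in>S. std_normal_distribution)"

definition expected_zeros :: "nat set \<Rightarrow> real set \<Rightarrow> ennreal" where
  "expected_zeros S I = (\<integral>\<^sup>+ a. num_zeros S I a \<partial>coeff_space S)"

end

theory Submission
  imports Defs "HOL-Computational_Algebra.Polynomial"
begin


abbreviation NN where "NN \<equiv> std_normal_distribution"

lemma prob_NN: "prob_space NN"
  using real_dist_normal_dist real_distribution_def by blast

lemma prob_coeff: "prob_space (coeff_space S)"
  unfolding coeff_space_def by (intro prob_space_PiM prob_NN)

lemma coord_indep:
  assumes "J \<noteq> {}"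
  shows "prob_space.indep_vars (coeff_space J) (\<lambda>_. NN) (\<lambda>j a. a j) J"
proof -
  interpret P: prob_space "coeff_space J" by (rule prob_coeff)
  have "distr (coeff_space J) (\<Pi>\<^sub>M i\<in>J. NN) (\<lambda>x. \<lambda>i\<in>J. x i) = coeff_space J"
    unfolding coeff_space_def
    by (subst distr_cong[OF refl refl, where g="\<lambda>x. x"])
       (auto simp: space_PiM PiE_def extensional_restrict)
  also have "\<dots> = (\<Pi>\<^sub>M i\<in>J. distr (coeff_space J) NN (\<lambda>x. x i))"
    unfolding coeff_space_def
    by (intro PiM_cong refl distr_PiM_component[symmetric] prob_NN)
  finally show ?thesis
    by (subst P.indep_vars_iff_distr_eq_PiM'[OF assms]) (auto simp: coeff_space_def)
qed

lemma toNN: "f \<in> borel_measurable M \<Longrightarrow> f \<in> measurable M NN"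
  using measurable_cong_sets[of M M NN borel] by simp

lemma comp_measNN: "i \<in> S \<Longrightarrow> (\<lambda>a. a i) \<in> measurable (coeff_space S) NN"
  unfolding coeff_space_def by simp

lemma comp_meas: "i \<in> S \<Longrightarrow> (\<lambda>a. a i) \<in> borel_measurable (coeff_space S)"
  using comp_measNN[of i S] by (subst measurable_cong_sets[OF refl, of _ NN]) auto

lemma lin_meas:
  assumes "h ` J \<subseteq> S"
  shows "(\<lambda>a. \<Sum>j\<in>J. c j * a (h j)) \<in> borel_measurable (coeff_space S)"
  using assms by (intro borel_measurable_sum borel_measurable_times borel_measurable_const comp_meas) auto

lemma coord_distributed:
  assumes "j \<in> J"
  shows "distributed (coeff_space J) lborel (\<lambda>a. a j) std_normal_density"
proof -
  have "distr (coeff_space J) lborel (\<lambda>a. a j) = distr (coeff_space J) NN (\<lambda>a. a j)"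
    by (rule distr_cong) auto
  also have "\<dots> = NN" unfolding coeff_space_def
    by (rule distr_PiM_component[OF prob_NN assms])
  moreover have "(\<lambda>a. a j) \<in> measurable (coeff_space J) NN"
    unfolding coeff_space_def using assms by simp
  then have "(\<lambda>a. a j) \<in> borel_measurable (coeff_space J)"
    by (subst measurable_cong_sets[OF refl, of _ NN]) auto
  ultimately show ?thesis unfolding distributed_def
    by (auto simp: coeff_space_def)
qed

lemma wsum_distributed:
  assumes "finite J" "(\<Sum>j\<in>J. (w j)^2) = 1"
  shows "distributed (coeff_space J) lborel (\<lambda>a. \<Sum>j\<in>J. w j * a j) std_normal_density"
proof -
  interpret P: prob_space "coeff_space J" by (rule prob_coeff)
  define J' where "J' = {j\<in>J. w j \<noteq> 0}"
  have fin': "finite J'" using assms(1) by (simp add: J'_def)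
  have s': "(\<Sum>j\<in>J'. (w j)^2) = 1"
  proof -
    have "(\<Sum>j\<in>J'. (w j)^2) = (\<Sum>j\<in>J. (w j)^2)"
      using assms(1) unfolding J'_def by (intro sum.mono_neutral_left) auto
    then show ?thesis using assms(2) by simp
  qed
  then have ne: "J' \<noteq> {}" by auto
  then have Jne: "J \<noteq> {}" by (auto simp: J'_def)
  have ind0: "P.indep_vars (\<lambda>_. NN) (\<lambda>j a. a j) J'"
    by (rule P.indep_vars_subset[OF coord_indep[OF Jne]]) (auto simp: J'_def)
  have ind: "P.indep_vars (\<lambda>_. borel) (\<lambda>j a. w j * a j) J'"
    by (rule P.indep_vars_compose2[OF ind0, where Y="\<lambda>j t. w j * t"]) auto
  have dist: "distributed (coeff_space J) lborel (\<lambda>a. w j * a j) (normal_density 0 \<bar>w j\<bar>)"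
    if "j \<in> J'" for j
  proof -
    have "w j \<noteq> 0" "j \<in> J" using that by (auto simp: J'_def)
    from P.normal_density_affine[OF coord_distributed[OF \<open>j\<in>J\<close>] _ \<open>w j \<noteq> 0\<close>, of 0]
    show ?thesis by simp
  qed
  have "distributed (coeff_space J) lborel (\<lambda>a. \<Sum>j\<in>J'. w j * a j)
      (normal_density (\<Sum>j\<in>J'. 0) (sqrt (\<Sum>j\<in>J'. \<bar>w j\<bar>\<^sup>2)))"
    by (rule P.sum_indep_normal[OF fin' ne ind]) (auto simp: J'_def dist)
  moreover have "(\<lambda>a. \<Sum>j\<in>J'. w j * a j) = (\<lambda>a. \<Sum>j\<in>J. w j * a j)"
    using assms(1) unfolding J'_def by (intro ext sum.mono_neutral_left) auto
  ultimately show ?thesis using s' by simp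
qed

lemma row_distr:
  assumes fin2: "finite S2" and v: "(\<Sum>e\<in>S2. (v e)^2) = 1" and e1: "e1 \<in> S1"
  shows "distr (coeff_space (sumset S1 S2)) lborel (\<lambda>a. \<Sum>e2\<in>S2. v e2 * a (e1 + e2)) = NN"
proof -
  let ?T = "sumset S1 S2"
  let ?r = "\<lambda>a. \<lambda>n\<in>S2. a (e1 + n)"
  have inj: "inj_on (\<lambda>n. e1 + n) S2" by (auto simp: inj_on_def)
  have into: "(\<lambda>n. e1 + n) \<in> S2 \<rightarrow> ?T" using e1 by (auto simp: sumset_def)
  have r: "distr (coeff_space ?T) (coeff_space S2) ?r = coeff_space S2"
    unfolding coeff_space_def
    using distr_PiM_reindex[of ?T "\<lambda>_. NN", OF prob_NN inj into] by simp
  have rm: "?r \<in> measurable (coeff_space ?T) (coeff_space S2)"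
    unfolding coeff_space_def using into by (auto intro!: measurable_restrict comp_measNN[unfolded coeff_space_def])
  have wm: "(\<lambda>b. \<Sum>e2\<in>S2. v e2 * b e2) \<in> measurable (coeff_space S2) lborel"
    unfolding coeff_space_def by simp
  have "distr (coeff_space ?T) lborel (\<lambda>a. \<Sum>e2\<in>S2. v e2 * a (e1 + e2))
      = distr (coeff_space ?T) lborel ((\<lambda>b. \<Sum>e2\<in>S2. v e2 * b e2) \<circ> ?r)"
    by (rule distr_cong) (auto simp: o_def)
  also have "\<dots> = distr (distr (coeff_space ?T) (coeff_space S2) ?r) lborel (\<lambda>b. \<Sum>e2\<in>S2. v e2 * b e2)"
    by (rule distr_distr[symmetric, OF wm rm])
  also have "\<dots> = distr (coeff_space S2) lborel (\<lambda>b. \<Sum>e2\<in>S2. v e2 * b e2)" by (simp only: r)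
  also have "\<dots> = NN"
    using distributed_distr_eq_density[OF wsum_distributed[OF fin2 v]] by simp
  finally show ?thesis .
qed

lemma matrix_distr:
  assumes fin1: "finite S1" and ne1: "S1 \<noteq> {}" and fin2: "finite S2"
    and inj: "inj_on (\<lambda>(e1,e2). e1 + e2) (S1 \<times> S2)"
    and v: "(\<Sum>e\<in>S2. (v e)^2) = 1"
  shows "distr (coeff_space (sumset S1 S2)) (coeff_space S1)
           (\<lambda>a. \<lambda>e1\<in>S1. \<Sum>e2\<in>S2. v e2 * a (e1 + e2)) = coeff_space S1"
proof -
  let ?T = "sumset S1 S2"
  let ?Y = "\<lambda>e1 a. \<Sum>e2\<in>S2. v e2 * a (e1 + e2)"
  let ?K = "\<lambda>e1. (\<lambda>n. e1 + n) ` S2"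
  interpret P: prob_space "coeff_space ?T" by (rule prob_coeff)
  have Tne: "?T \<noteq> {}"
  proof -
    from ne1 obtain x where "x \<in> S1" by auto
    have "S2 \<noteq> {}" using v by auto
    then obtain y where "y \<in> S2" by auto
    then show ?thesis using \<open>x \<in> S1\<close> by (auto simp: sumset_def)
  qed
  have ind0: "P.indep_vars (\<lambda>_. NN) (\<lambda>j a. a j) ?T" by (rule coord_indep[OF Tne])
  have disj: "disjoint_family_on ?K S1"
    using inj unfolding disjoint_family_on_def inj_on_def by fastforce
  have Ksub: "?K e1 \<subseteq> ?T" if "e1 \<in> S1" for e1 using that by (auto simp: sumset_def)
  have ind1: "P.indep_vars (\<lambda>e1. PiM (?K e1) (\<lambda>_. NN)) (\<lambda>e1 a. restrict (\<lambda>i. a i) (?K e1)) S1"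
    by (rule P.indep_vars_restrict[OF ind0 Ksub disj])
  have ind: "P.indep_vars (\<lambda>_. borel) ?Y S1"
  proof -
    have "P.indep_vars (\<lambda>_. borel) (\<lambda>e1 a. (\<lambda>r. \<Sum>e2\<in>S2. v e2 * r (e1 + e2)) (restrict (\<lambda>i. a i) (?K e1))) S1"
      by (rule P.indep_vars_compose2[OF ind1]) auto
    moreover have "(\<lambda>e1 a. (\<lambda>r. \<Sum>e2\<in>S2. v e2 * r (e1 + e2)) (restrict (\<lambda>i. a i) (?K e1))) = ?Y"
      by (intro ext sum.cong) auto
    ultimately show ?thesis by simp
  qed
  have rv: "?Y e1 \<in> borel_measurable (coeff_space ?T)" if "e1 \<in> S1" for e1
    using lin_meas[of "\<lambda>e2. e1 + e2" S2 ?T v] Ksub[OF that] by simp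
  have "distr (coeff_space ?T) (\<Pi>\<^sub>M i\<in>S1. borel) (\<lambda>x. \<lambda>i\<in>S1. ?Y i x) = (\<Pi>\<^sub>M i\<in>S1. distr (coeff_space ?T) borel (?Y i))"
    using P.indep_vars_iff_distr_eq_PiM'[OF ne1 rv] ind by simp
  also have "\<dots> = coeff_space S1" unfolding coeff_space_def[of S1]
  proof (rule PiM_cong[OF refl])
    fix e1 assume "e1 \<in> S1"
    have "distr (coeff_space ?T) borel (?Y e1) = distr (coeff_space ?T) lborel (?Y e1)"
      by (rule distr_cong) auto
    also have "\<dots> = NN" by (rule row_distr[OF fin2 v \<open>e1 \<in> S1\<close>])
    finally show "distr (coeff_space ?T) borel (?Y e1) = NN" .
  qed
  finally have *: "distr (coeff_space ?T) (\<Pi>\<^sub>M i\<in>S1. borel) (\<lambda>x. \<lambda>i\<in>S1. ?Y i x) = coeff_space S1" .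
  have "distr (coeff_space ?T) (coeff_space S1) (\<lambda>x. \<lambda>i\<in>S1. ?Y i x)
      = distr (coeff_space ?T) (\<Pi>\<^sub>M i\<in>S1. borel) (\<lambda>x. \<lambda>i\<in>S1. ?Y i x)"
    unfolding coeff_space_def by (rule distr_cong) (auto intro!: sets_PiM_cong)
  then show ?thesis using * by simp
qed

definition Ev :: "nat set \<Rightarrow> real \<Rightarrow> real \<Rightarrow> (nat \<Rightarrow> real) set" where
  "Ev S x y = {a \<in> space (coeff_space S). (0 < fpoly S a x) \<noteq> (0 < fpoly S a y)}"

lemma fpoly_meas[measurable]: "(\<lambda>a. fpoly S a x) \<in> borel_measurable (coeff_space S)"
  unfolding fpoly_def using lin_meas[of "\<lambda>e. e" S S "\<lambda>e. x ^ e"]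
  by (simp add: mult.commute)

lemma Ev_sets[measurable]: "Ev S x y \<in> sets (coeff_space S)"
  unfolding Ev_def by measurable

lemma fpoly_sumset:
  assumes fin1: "finite S1" and fin2: "finite S2" and inj: "inj_on (\<lambda>(e1,e2). e1 + e2) (S1 \<times> S2)"
  shows "fpoly (sumset S1 S2) a z = (\<Sum>e1\<in>S1. \<Sum>e2\<in>S2. a (e1 + e2) * z ^ e1 * z ^ e2)"
proof -
  have T: "sumset S1 S2 = (\<lambda>(e1,e2). e1 + e2) ` (S1 \<times> S2)"
    by (auto simp: sumset_def)
  have "fpoly (sumset S1 S2) a z = (\<Sum>p\<in>S1 \<times> S2. a (fst p + snd p) * z ^ (fst p + snd p))"
    unfolding fpoly_def T by (subst sum.reindex[OF inj]) (auto simp: case_prod_beta)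
  also have "\<dots> = (\<Sum>e1\<in>S1. \<Sum>e2\<in>S2. a (e1 + e2) * z ^ e1 * z ^ e2)"
    unfolding sum.cartesian_product by (intro sum.cong) (auto simp: power_add mult.assoc)
  finally show ?thesis .
qed

lemma half_coupling:
  assumes fin1: "finite S1" and ne1: "S1 \<noteq> {}" and fin2: "finite S2" and ne2: "S2 \<noteq> {}"
    and inj: "inj_on (\<lambda>(e1,e2). e1 + e2) (S1 \<times> S2)" and x: "x > 0"
    and F: "\<And>a. F a = (\<Sum>e1\<in>S1. \<Sum>e2\<in>S2. a (e1 + e2) * y ^ e1 * x ^ e2)"
    and G: "\<And>a. G a = (\<Sum>e1\<in>S1. \<Sum>e2\<in>S2. a (e1 + e2) * z ^ e1 * x ^ e2)"
  shows "emeasure (coeff_space (sumset S1 S2)) {a \<in> space (coeff_space (sumset S1 S2)). (0 < F a) \<noteq> (0 < G a)}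
       = emeasure (coeff_space S1) (Ev S1 y z)"
proof -
  let ?T = "sumset S1 S2"
  define c where "c = sqrt (\<Sum>e\<in>S2. (x ^ e)^2)"
  have pos: "(\<Sum>e\<in>S2. (x ^ e)^2) > 0"
    using fin2 ne2 x by (intro sum_pos) auto
  then have c: "c > 0" unfolding c_def by simp
  define v where "v e = x ^ e / c" for e
  have v: "(\<Sum>e\<in>S2. (v e)^2) = 1"
  proof -
    have "(\<Sum>e\<in>S2. (v e)^2) = (\<Sum>e\<in>S2. (x ^ e)^2) / c^2"
      unfolding v_def by (simp add: power_divide sum_divide_distrib)
    also have "c^2 = (\<Sum>e\<in>S2. (x ^ e)^2)" unfolding c_def
      by (simp add: sum_nonneg)
    finally show ?thesis using pos by simp
  qed
  define \<Phi> where "\<Phi> = (\<lambda>a. \<lambda>e1\<in>S1. \<Sum>e2\<in>S2. v e2 * a (e1 + e2))"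
  have D: "distr (coeff_space ?T) (coeff_space S1) \<Phi> = coeff_space S1"
    unfolding \<Phi>_def by (rule matrix_distr[OF fin1 ne1 fin2 inj v])
  have Pm: "\<Phi> \<in> measurable (coeff_space ?T) (coeff_space S1)"
  proof -
    have "\<Phi> \<in> measurable (coeff_space ?T) (coeff_space S1)"
      unfolding \<Phi>_def coeff_space_def[of S1]
    proof (rule measurable_restrict)
      fix e1 assume "e1 \<in> S1"
      then have "(\<lambda>e2. e1 + e2) ` S2 \<subseteq> ?T" by (auto simp: sumset_def)
      from lin_meas[OF this, of v]
      show "(\<lambda>a. \<Sum>e2\<in>S2. v e2 * a (e1 + e2)) \<in> measurable (coeff_space ?T) NN"
        by (rule toNN)
    qed
    then show ?thesis .
  qed
  have key: "(\<Sum>e1\<in>S1. \<Sum>e2\<in>S2. a (e1 + e2) * w ^ e1 * x ^ e2) = c * fpoly S1 (\<Phi> a) w" for a w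
  proof -
    have "c * fpoly S1 (\<Phi> a) w = (\<Sum>e1\<in>S1. \<Sum>e2\<in>S2. c * (v e2 * a (e1 + e2)) * w ^ e1)"
      unfolding fpoly_def \<Phi>_def by (simp add: sum_distrib_left sum_distrib_right mult.assoc)
    also have "\<dots> = (\<Sum>e1\<in>S1. \<Sum>e2\<in>S2. a (e1 + e2) * w ^ e1 * x ^ e2)"
      using c by (intro sum.cong refl) (simp add: v_def)
    finally show ?thesis by simp
  qed
  have sg: "(0 < c * t) = (0 < t)" for t using c by (simp add: zero_less_mult_iff)
  have "{a \<in> space (coeff_space ?T). (0 < F a) \<noteq> (0 < G a)} = \<Phi> -` Ev S1 y z \<inter> space (coeff_space ?T)"
    using measurable_space[OF Pm] unfolding Ev_def F G key sg by auto
  then show ?thesis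
    using emeasure_distr[OF Pm Ev_sets, of y z] D by simp
qed

lemma sumset_comm: "sumset S2 S1 = sumset S1 S2"
  unfolding sumset_def by (auto; metis add.commute)

lemma coupling:
  assumes fin1: "finite S1" and ne1: "S1 \<noteq> {}" and fin2: "finite S2" and ne2: "S2 \<noteq> {}"
    and inj: "inj_on (\<lambda>(e1,e2). e1 + e2) (S1 \<times> S2)" and x: "x > 0" and y: "y > 0"
  shows "emeasure (coeff_space (sumset S1 S2)) (Ev (sumset S1 S2) x y)
     \<le> emeasure (coeff_space S1) (Ev S1 x y) + emeasure (coeff_space S2) (Ev S2 x y)"
proof -
  let ?T = "sumset S1 S2"
  let ?P = "coeff_space ?T"
  define M where "M a = (\<Sum>e1\<in>S1. \<Sum>e2\<in>S2. a (e1 + e2) * y ^ e1 * x ^ e2)" for a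
  have inj': "inj_on (\<lambda>(e1,e2). e1 + e2) (S2 \<times> S1)"
    using inj unfolding inj_on_def by (auto simp: add.commute)
  define A1 where "A1 = {a \<in> space ?P. (0 < fpoly ?T a x) \<noteq> (0 < M a)}"
  define A2 where "A2 = {a \<in> space ?P. (0 < M a) \<noteq> (0 < fpoly ?T a y)}"
  have Mm[measurable]: "M \<in> borel_measurable ?P"
    unfolding M_def[abs_def]
  proof (intro borel_measurable_sum)
    fix e1 e2 assume "e1 \<in> S1" "e2 \<in> S2"
    then have "e1 + e2 \<in> ?T" by (auto simp: sumset_def)
    then show "(\<lambda>a. a (e1 + e2) * y ^ e1 * x ^ e2) \<in> borel_measurable ?P"
      by (intro borel_measurable_times borel_measurable_const comp_meas)
  qed
  have A1m: "A1 \<in> sets ?P" unfolding A1_def by measurable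
  have A2m: "A2 \<in> sets ?P" unfolding A2_def by measurable
  have E1: "emeasure ?P A1 = emeasure (coeff_space S1) (Ev S1 x y)"
    unfolding A1_def
    by (rule half_coupling[OF fin1 ne1 fin2 ne2 inj x]) (simp_all only: fpoly_sumset[OF fin1 fin2 inj] M_def)
  have E2: "emeasure ?P A2 = emeasure (coeff_space S2) (Ev S2 x y)"
  proof -
    have Ma: "M a = (\<Sum>e1\<in>S2. \<Sum>e2\<in>S1. a (e1 + e2) * x ^ e1 * y ^ e2)" for a
      unfolding M_def by (subst sum.swap) (intro sum.cong refl, simp only: ac_simps)
    have Fa: "fpoly ?T a y = (\<Sum>e1\<in>S2. \<Sum>e2\<in>S1. a (e1 + e2) * y ^ e1 * y ^ e2)" for a
      unfolding fpoly_sumset[OF fin1 fin2 inj]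
      by (subst sum.swap) (intro sum.cong refl, simp only: ac_simps)
    have "emeasure (coeff_space (sumset S2 S1)) {a \<in> space (coeff_space (sumset S2 S1)). (0 < M a) \<noteq> (0 < fpoly ?T a y)}
       = emeasure (coeff_space S2) (Ev S2 x y)"
      by (rule half_coupling[OF fin2 ne2 fin1 ne1 inj' y, OF Ma Fa])
    then show ?thesis unfolding A2_def sumset_comm[of S1 S2] .
  qed
  have "Ev ?T x y \<subseteq> A1 \<union> A2" unfolding Ev_def A1_def A2_def by auto
  then have "emeasure ?P (Ev ?T x y) \<le> emeasure ?P (A1 \<union> A2)"
    using A1m A2m by (intro emeasure_mono) auto
  also have "\<dots> \<le> emeasure ?P A1 + emeasure ?P A2"
    using A1m A2m by (rule emeasure_subadditive)
  finally show ?thesis unfolding E1 E2 .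
qed



definition sc :: "nat set \<Rightarrow> real list \<Rightarrow> (nat \<Rightarrow> real) \<Rightarrow> nat" where
  "sc S L a = card {i. Suc i < length L \<and> (0 < fpoly S a (L!i)) \<noteq> (0 < fpoly S a (L ! Suc i))}"

lemma fpoly_cont: "continuous_on A (fpoly S a)"
  unfolding fpoly_def[abs_def] by (intro continuous_intros)

lemma num_zeros_eq: "num_zeros S I a = (if finite {x\<in>I. fpoly S a x = 0} then of_nat (card {x\<in>I. fpoly S a x = 0}) else \<infinity>)"
  unfolding num_zeros_def by (rule emeasure_count_space) auto

lemma sign_change_zero:
  assumes "p < q" "fpoly S a p \<noteq> 0" "fpoly S a q \<noteq> 0"
    "(0 < fpoly S a p) \<noteq> (0 < fpoly S a q)"
  shows "\<exists>z. p < z \<and> z < q \<and> fpoly S a z = 0"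
proof -
  have c: "continuous_on {p..q} (fpoly S a)" by (rule fpoly_cont)
  have "\<exists>z. p \<le> z \<and> z \<le> q \<and> fpoly S a z = 0"
  proof (cases "fpoly S a p < 0")
    case True
    then have "fpoly S a q > 0" using assms by auto
    then show ?thesis using IVT'[of "fpoly S a" p 0 q, OF _ _ _ c] True assms(1) by auto
  next
    case False
    then have "fpoly S a p > 0" "fpoly S a q < 0" using assms by auto
    then show ?thesis using IVT2'[of "fpoly S a" q 0 p, OF _ _ _ c] assms(1) by auto
  qed
  then obtain z where "p \<le> z" "z \<le> q" "fpoly S a z = 0" by blast
  moreover have "z \<noteq> p" "z \<noteq> q" using assms calculation by auto
  ultimately show ?thesis by (intro exI[of _ z]) auto
qed

lemma sc_le_zeros:
  assumes sorted: "sorted_wrt (<) L" and LI: "set L \<subseteq> I" and I: "is_interval I"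
    and nz: "\<forall>p\<in>set L. fpoly S a p \<noteq> 0"
  shows "of_nat (sc S L a) \<le> num_zeros S I a"
proof -
  define Idx where "Idx = {i. Suc i < length L \<and> (0 < fpoly S a (L!i)) \<noteq> (0 < fpoly S a (L ! Suc i))}"
  define Z where "Z = {x\<in>I. fpoly S a x = 0}"
  have "\<forall>i\<in>Idx. \<exists>z. L!i < z \<and> z < L!Suc i \<and> fpoly S a z = 0"
  proof
    fix i assume i: "i \<in> Idx"
    then have "Suc i < length L" by (auto simp: Idx_def)
    then have "L!i < L!Suc i" by (intro sorted_wrt_nth_less[OF sorted]) auto
    moreover have "fpoly S a (L!i) \<noteq> 0" "fpoly S a (L!Suc i) \<noteq> 0"
      using nz \<open>Suc i < length L\<close> by auto
    ultimately show "\<exists>z. L!i < z \<and> z < L!Suc i \<and> fpoly S a z = 0"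
      using i by (intro sign_change_zero) (auto simp: Idx_def)
  qed
  then obtain z where z: "\<And>i. i \<in> Idx \<Longrightarrow> L!i < z i \<and> z i < L!Suc i \<and> fpoly S a (z i) = 0"
    by metis
  have so: "sorted L" using sorted by (rule strict_sorted_imp_sorted)
  have lt: "z i < z j" if "i \<in> Idx" "j \<in> Idx" "i < j" for i j
  proof -
    have "L!Suc i \<le> L!j" using that by (intro sorted_nth_mono[OF so]) (auto simp: Idx_def)
    then show ?thesis using z[OF that(1)] z[OF that(2)] by linarith
  qed
  have inj: "inj_on z Idx"
  proof (rule inj_onI)
    fix i j assume "i \<in> Idx" "j \<in> Idx" "z i = z j"
    then show "i = j" using lt[of i j] lt[of j i] by (cases i j rule: linorder_cases) auto
  qed
  have sub: "z ` Idx \<subseteq> Z"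
  proof
    fix w assume "w \<in> z ` Idx"
    then obtain i where i: "i \<in> Idx" "w = z i" by auto
    then have "Suc i < length L" by (auto simp: Idx_def)
    then have "L!i \<in> I" "L!Suc i \<in> I" using LI by auto
    then have "z i \<in> I" using I z[OF i(1)] unfolding is_interval_1 by (meson less_imp_le)
    then show "w \<in> Z" using z[OF i(1)] i by (auto simp: Z_def)
  qed
  show ?thesis
  proof (cases "finite Z")
    case True
    have "card Idx = card (z ` Idx)" using inj by (simp add: card_image)
    also have "\<dots> \<le> card Z" using True sub by (rule card_mono)
    finally show ?thesis unfolding num_zeros_eq Z_def[symmetric] sc_def Idx_def[symmetric]
      using True by simp
  next
    case False
    then show ?thesis unfolding num_zeros_eq Z_def[symmetric] by simp
  qed
qed

definition fder :: "nat set \<Rightarrow> (nat \<Rightarrow> real) \<Rightarrow> real \<Rightarrow> real" where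
  "fder S a x = (\<Sum>e\<in>S. a e * (of_nat e * x ^ (e - 1)))"

lemma fpoly_deriv: "(fpoly S a has_real_derivative fder S a x) (at x)"
  unfolding fpoly_def[abs_def] fder_def
  by (auto intro!: derivative_eq_intros sum.cong)

definition G :: "nat \<Rightarrow> real set" where
  "G n = (\<lambda>k::int. of_int k / 2^n) ` {-(int n * 2^n) .. int n * 2^n}"

definition grid :: "real set \<Rightarrow> nat \<Rightarrow> real list" where
  "grid I n = sorted_list_of_set (I \<inter> G n)"

lemma finite_G: "finite (G n)" unfolding G_def by simp

lemma set_grid: "set (grid I n) = I \<inter> G n"
  unfolding grid_def using finite_G by simp

lemma sorted_grid: "sorted_wrt (<) (grid I n)"
  unfolding grid_def by (rule strict_sorted_list_of_set)

lemma change_index: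
  assumes "j < k" "k < length L" "P (L!j) \<noteq> P (L!k)"
  shows "\<exists>i. j \<le> i \<and> i < k \<and> P (L!i) \<noteq> P (L!Suc i)"
  using assms
proof (induction k)
  case 0 then show ?case by simp
next
  case (Suc k)
  show ?case
  proof (cases "P (L!k) = P (L!Suc k)")
    case True
    have "j \<noteq> k" using True Suc.prems(3) by auto
    then have jk: "j < k" using Suc.prems(1) by simp
    have "k < length L" using Suc.prems(2) by simp
    have "P (L!j) \<noteq> P (L!k)" using True Suc.prems(3) by simp
    then obtain i where "j \<le> i" "i < k" "P (L!i) \<noteq> P (L!Suc i)"
      using Suc.IH[OF jk \<open>k < length L\<close>] by blast
    then show ?thesis by (intro exI[of _ i]) simp
  next
    case False
    then show ?thesis using Suc.prems by (intro exI[of _ k]) simp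
  qed
qed

lemma simple_zero_sign:
  assumes "fpoly S a z = 0" "fder S a z \<noteq> 0"
  shows "\<exists>d>0. \<forall>h h'. 0 < h \<longrightarrow> h < d \<longrightarrow> 0 < h' \<longrightarrow> h' < d \<longrightarrow>
           (0 < fpoly S a (z - h)) \<noteq> (0 < fpoly S a (z + h'))"
proof (cases "fder S a z > 0")
  case True
  obtain d1 where d1: "d1 > 0" "\<forall>h>0. h < d1 \<longrightarrow> fpoly S a z < fpoly S a (z + h)"
    using DERIV_pos_inc_right[OF fpoly_deriv True] by blast
  obtain d2 where d2: "d2 > 0" "\<forall>h>0. h < d2 \<longrightarrow> fpoly S a (z - h) < fpoly S a z"
    using DERIV_pos_inc_left[OF fpoly_deriv True] by blast
  show ?thesis
  proof (intro exI[of _ "min d1 d2"] conjI allI impI)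
    show "min d1 d2 > 0" using d1(1) d2(1) by simp
    fix h h' :: real assume h: "0 < h" "h < min d1 d2" "0 < h'" "h' < min d1 d2"
    have "fpoly S a (z - h) < fpoly S a z" using d2(2) h by simp
    moreover have "fpoly S a z < fpoly S a (z + h')" using d1(2) h by simp
    ultimately show "(0 < fpoly S a (z - h)) \<noteq> (0 < fpoly S a (z + h'))" using assms(1) by simp
  qed
next
  case False
  then have neg: "fder S a z < 0" using assms(2) by auto
  obtain d1 where d1: "d1 > 0" "\<forall>h>0. h < d1 \<longrightarrow> fpoly S a z > fpoly S a (z + h)"
    using DERIV_neg_dec_right[OF fpoly_deriv neg] by blast
  obtain d2 where d2: "d2 > 0" "\<forall>h>0. h < d2 \<longrightarrow> fpoly S a z < fpoly S a (z - h)"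
    using DERIV_neg_dec_left[OF fpoly_deriv neg] by blast
  show ?thesis
  proof (intro exI[of _ "min d1 d2"] conjI allI impI)
    show "min d1 d2 > 0" using d1(1) d2(1) by simp
    fix h h' :: real assume h: "0 < h" "h < min d1 d2" "0 < h'" "h' < min d1 d2"
    have "fpoly S a (z - h) > fpoly S a z" using d2(2) h by simp
    moreover have "fpoly S a z > fpoly S a (z + h')" using d1(2) h by simp
    ultimately show "(0 < fpoly S a (z - h)) \<noteq> (0 < fpoly S a (z + h'))" using assms(1) by simp
  qed
qed

lemma grid_point_change:
  assumes d: "\<delta> > 0" and sub: "{z - \<delta><..<z + \<delta>} \<subseteq> I" and n: "1 / 2^n < \<delta>" "\<bar>z\<bar> + \<delta> \<le> real n"
    and sgn: "\<forall>h h'. 0 < h \<longrightarrow> h < \<delta> \<longrightarrow> 0 < h' \<longrightarrow> h' < \<delta> \<longrightarrow>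
           (0 < fpoly S a (z - h)) \<noteq> (0 < fpoly S a (z + h'))"
  shows "\<exists>i. Suc i < length (grid I n) \<and> (0 < fpoly S a (grid I n ! i)) \<noteq> (0 < fpoly S a (grid I n ! Suc i))
            \<and> \<bar>grid I n ! i - z\<bar> < \<delta>"
proof -
  let ?L = "grid I n"
  let ?P = "\<lambda>x. 0 < fpoly S a x"
  define t where "t = (2::real)^n"
  have pos: "0 < t" unfolding t_def by simp
  define k1 where "k1 = \<lceil>z * t\<rceil> - 1"
  define k2 where "k2 = \<lfloor>z * t\<rfloor> + 1"
  define p where "p = (of_int k1 / t :: real)"
  define q where "q = (of_int k2 / t :: real)"
  have k1a: "real_of_int k1 < z * t" "z * t - 1 \<le> real_of_int k1"
    unfolding k1_def using ceiling_correct[of "z * t"] by simp_all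
  have k2a: "z * t < real_of_int k2" "real_of_int k2 \<le> z * t + 1"
    unfolding k2_def using floor_correct[of "z * t"] by simp_all
  have p1: "p < z" unfolding p_def using k1a pos by (simp add: divide_less_eq)
  have e1: "(z - 1/t) * t = z*t - 1" "(z + 1/t) * t = z*t + 1" using pos by (simp_all add: field_simps)
  have p2: "z - 1/t \<le> p" unfolding p_def using k1a pos e1 by (simp add: le_divide_eq)
  have q1: "z < q" unfolding q_def using k2a pos by (simp add: less_divide_eq)
  have q2: "q \<le> z + 1/t" unfolding q_def using k2a pos using e1 by (simp add: divide_le_eq)
  have nt: "1 / t < \<delta>" using n(1) unfolding t_def .
  have inG: "of_int k / t \<in> G n" if kk: "\<bar>of_int k / t\<bar> \<le> real n" for k
  proof -
    have "\<bar>of_int k / t\<bar> = \<bar>real_of_int k\<bar> / t" using pos by (simp add: abs_divide)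
    then have "\<bar>real_of_int k\<bar> / t \<le> real n" using kk by linarith
    then have "\<bar>real_of_int k\<bar> \<le> real n * t" using pos by (simp add: divide_le_eq)
    moreover have "real n * t = real_of_int (int n * 2^n)" unfolding t_def by simp
    moreover have "\<bar>real_of_int k\<bar> = real_of_int \<bar>k\<bar>" by simp
    ultimately have "real_of_int \<bar>k\<bar> \<le> real_of_int (int n * 2^n)" by linarith
    then have kb: "\<bar>k\<bar> \<le> int n * 2^n" by (simp only: of_int_le_iff)
    have "k \<le> int n * 2^n" "- k \<le> int n * 2^n" using abs_le_D1[OF kb] abs_le_D2[OF kb] by auto
    then have "k \<in> {-(int n * 2^n) .. int n * 2^n}" unfolding atLeastAtMost_iff by linarith
    then show ?thesis unfolding G_def t_def by (rule imageI)
  qed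
  have za: "- \<bar>z\<bar> \<le> z" "z \<le> \<bar>z\<bar>" by simp_all
  have pa: "\<bar>p\<bar> \<le> real n" using p1 p2 nt n(2) za by (simp add: abs_le_iff)
  have qa: "\<bar>q\<bar> \<le> real n" using q1 q2 nt n(2) za by (simp add: abs_le_iff)
  have pI: "p \<in> set ?L" unfolding set_grid
  proof
    have "p \<in> {z - \<delta><..<z + \<delta>}" using p1 p2 nt d by simp
    then show "p \<in> I" using sub by blast
    show "p \<in> G n" using inG[of k1] pa unfolding p_def by blast
  qed
  have qI: "q \<in> set ?L" unfolding set_grid
  proof
    have "q \<in> {z - \<delta><..<z + \<delta>}" using q1 q2 nt d by simp
    then show "q \<in> I" using sub by blast
    show "q \<in> G n" using inG[of k2] qa unfolding q_def by blast
  qed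
  obtain j where j: "j < length ?L" "?L ! j = p" using pI by (auto simp: in_set_conv_nth)
  obtain k where k: "k < length ?L" "?L ! k = q" using qI by (auto simp: in_set_conv_nth)
  have so: "sorted ?L" by (rule strict_sorted_imp_sorted[OF sorted_grid])
  have jk: "j < k"
  proof (rule ccontr)
    assume "\<not> j < k"
    then have "?L ! k \<le> ?L ! j" using j by (intro sorted_nth_mono[OF so]) auto
    then show False using j k p1 q1 by simp
  qed
  have "z - p < \<delta>" "q - z < \<delta>" "0 < z - p" "0 < q - z" using p1 p2 q1 q2 nt by linarith+
  then have "?P (z - (z - p)) \<noteq> ?P (z + (q - z))"
    using sgn by blast
  then have "?P (?L!j) \<noteq> ?P (?L!k)" using j k by simp
  then obtain i where i: "j \<le> i" "i < k" "?P (?L!i) \<noteq> ?P (?L!Suc i)"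
    using change_index[of j k ?L ?P] jk k(1) by blast
  have "?L ! j \<le> ?L ! i" using i k(1) by (intro sorted_nth_mono[OF so]) auto
  moreover have "?L ! i \<le> ?L ! k" using k(1) i by (intro sorted_nth_mono[OF so]) auto
  ultimately have "\<bar>?L ! i - z\<bar> < \<delta>" using j k p2 q2 nt by (simp add: abs_less_iff)
  moreover have "Suc i < length ?L" using i k(1) by simp
  ultimately show ?thesis using i by blast
qed

lemma finite_pos_lb:
  fixes A :: "real set"
  assumes "finite A" "\<forall>x\<in>A. 0 < x"
  shows "\<exists>\<rho>>0. \<forall>x\<in>A. \<rho> \<le> x"
  using assms
proof (induction A rule: finite_induct)
  case empty then show ?case by (intro exI[of _ 1]) simp
next
  case (insert x A)
  then obtain \<rho> where "\<rho> > 0" "\<forall>y\<in>A. \<rho> \<le> y" by auto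
  then show ?case using insert.prems by (intro exI[of _ "min \<rho> x"]) auto
qed

lemma finite_abs_bound:
  fixes A :: "real set"
  assumes "finite A"
  shows "\<exists>R. \<forall>x\<in>A. \<bar>x\<bar> \<le> R"
  using assms
proof (induction A rule: finite_induct)
  case empty then show ?case by simp
next
  case (insert x A)
  then obtain R where "\<forall>y\<in>A. \<bar>y\<bar> \<le> R" by auto
  then show ?case by (intro exI[of _ "max R \<bar>x\<bar>"]) auto
qed

lemma zeros_finite:
  assumes fin: "finite S" and e: "e \<in> S" "a e \<noteq> 0"
  shows "finite {x. fpoly S a x = 0}"
proof -
  define p where "p = (\<Sum>e\<in>S. monom (a e) e)"
  have pe: "poly p x = fpoly S a x" for x
    unfolding p_def fpoly_def by (simp add: poly_sum poly_monom)
  have "coeff p e = (\<Sum>e'\<in>S. if e' = e then a e' else 0)"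
    unfolding p_def by (simp add: coeff_sum)
  also have "\<dots> = a e" using fin e(1) by (simp add: sum.delta)
  finally have "p \<noteq> 0" using e(2) by auto
  then have "finite {x. poly p x = 0}" by (rule poly_roots_finite)
  then show ?thesis unfolding pe .
qed

lemma zeros_le_liminf:
  assumes fin: "finite S" and op: "open I" and pos: "I \<subseteq> {0<..}"
    and good: "\<forall>x>0. \<not> (fpoly S a x = 0 \<and> fder S a x = 0)"
  shows "num_zeros S I a \<le> liminf (\<lambda>n. of_nat (sc S (grid I n) a))"
proof -
  define Z where "Z = {x\<in>I. fpoly S a x = 0}"
  have "\<exists>e\<in>S. a e \<noteq> 0"
  proof (rule ccontr)
    assume "\<not> (\<exists>e\<in>S. a e \<noteq> 0)"
    then have "fpoly S a 1 = 0" "fder S a 1 = 0" unfolding fpoly_def fder_def by auto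
    then show False using good by auto
  qed
  then obtain e where e: "e \<in> S" "a e \<noteq> 0" by blast
  have finZ: "finite Z" unfolding Z_def
    by (rule finite_subset[OF _ zeros_finite[of S e a, OF fin e]]) auto
  have "\<forall>z\<in>Z. \<exists>r>0. {z - r<..<z + r} \<subseteq> I \<and> (\<forall>h h'. 0 < h \<longrightarrow> h < r \<longrightarrow> 0 < h' \<longrightarrow> h' < r \<longrightarrow>
           (0 < fpoly S a (z - h)) \<noteq> (0 < fpoly S a (z + h')))"
  proof
    fix z assume z: "z \<in> Z"
    then have zI: "z \<in> I" and fz: "fpoly S a z = 0" by (auto simp: Z_def)
    then have "z > 0" using pos by auto
    then have "fder S a z \<noteq> 0" using good fz by auto
    then obtain d where d: "d > 0" "\<forall>h h'. 0 < h \<longrightarrow> h < d \<longrightarrow> 0 < h' \<longrightarrow> h' < d \<longrightarrow>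
           (0 < fpoly S a (z - h)) \<noteq> (0 < fpoly S a (z + h'))"
      using simple_zero_sign[OF fz] by blast
    obtain \<epsilon> where \<epsilon>: "\<epsilon> > 0" "ball z \<epsilon> \<subseteq> I" using op zI by (meson openE)
    have "{z - min d \<epsilon><..<z + min d \<epsilon>} \<subseteq> ball z \<epsilon>"
      by (auto simp: dist_real_def abs_less_iff)
    then show "\<exists>r>0. {z - r<..<z + r} \<subseteq> I \<and> (\<forall>h h'. 0 < h \<longrightarrow> h < r \<longrightarrow> 0 < h' \<longrightarrow> h' < r \<longrightarrow>
           (0 < fpoly S a (z - h)) \<noteq> (0 < fpoly S a (z + h')))"
      using \<epsilon> d by (intro exI[of _ "min d \<epsilon>"]) auto
  qed
  then obtain r where r: "\<And>z. z \<in> Z \<Longrightarrow> r z > 0 \<and> {z - r z<..<z + r z} \<subseteq> I \<and>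
      (\<forall>h h'. 0 < h \<longrightarrow> h < r z \<longrightarrow> 0 < h' \<longrightarrow> h' < r z \<longrightarrow>
           (0 < fpoly S a (z - h)) \<noteq> (0 < fpoly S a (z + h')))"
    by metis
  obtain \<delta>1 where \<delta>1: "\<delta>1 > 0" "\<forall>x\<in>r ` Z. \<delta>1 \<le> x"
    using finite_pos_lb[of "r ` Z"] finZ r by auto
  define D where "D = (\<lambda>(z, z'). \<bar>z - z'\<bar>) ` {p \<in> Z \<times> Z. fst p \<noteq> snd p}"
  have "finite D" unfolding D_def using finZ by auto
  moreover have "\<forall>x\<in>D. 0 < x" unfolding D_def by auto
  ultimately obtain \<rho> where \<rho>: "\<rho> > 0" "\<forall>x\<in>D. \<rho> \<le> x" using finite_pos_lb by blast
  have sep: "\<rho> \<le> \<bar>z - z'\<bar>" if "z \<in> Z" "z' \<in> Z" "z \<noteq> z'" for z z'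
    using \<rho>(2) that unfolding D_def by force
  define \<delta> where "\<delta> = min \<delta>1 (\<rho> / 2)"
  have \<delta>: "\<delta> > 0" using \<delta>1 \<rho> by (simp add: \<delta>_def)
  obtain R where R: "\<forall>z\<in>Z. \<bar>z\<bar> \<le> R" using finite_abs_bound[OF finZ] by blast
  obtain n1 where n1: "(1/2::real) ^ n1 < \<delta>" using real_arch_pow_inv[OF \<delta>, of "1/2"] by auto
  define n0 where "n0 = max n1 (nat \<lceil>R + \<delta>\<rceil>)"
  have ev: "of_nat (card Z) \<le> (of_nat (sc S (grid I n) a) :: ennreal)" if n: "n \<ge> n0" for n
  proof -
    let ?L = "grid I n"
    define Idx where "Idx = {i. Suc i < length ?L \<and> (0 < fpoly S a (?L!i)) \<noteq> (0 < fpoly S a (?L ! Suc i))}"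
    have "(1/2::real) ^ n \<le> (1/2) ^ n1" using n by (intro power_decreasing) (auto simp: n0_def)
    then have n_1: "1 / 2^n < \<delta>" using n1 by (simp add: power_divide)
    have "R + \<delta> \<le> real (nat \<lceil>R + \<delta>\<rceil>)" by linarith
    also have "\<dots> \<le> real n" using n by (simp add: n0_def)
    finally have n_2: "R + \<delta> \<le> real n" .
    have "\<forall>z\<in>Z. \<exists>i. i \<in> Idx \<and> \<bar>?L ! i - z\<bar> < \<delta>"
    proof
      fix z assume z: "z \<in> Z"
      have rz: "\<delta> \<le> r z" using \<delta>1(2) z unfolding \<delta>_def by auto
      have sub: "{z - \<delta><..<z + \<delta>} \<subseteq> I" using r[OF z] rz by auto
      have sgn: "\<forall>h h'. 0 < h \<longrightarrow> h < \<delta> \<longrightarrow> 0 < h' \<longrightarrow> h' < \<delta> \<longrightarrow>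
           (0 < fpoly S a (z - h)) \<noteq> (0 < fpoly S a (z + h'))"
        using r[OF z] rz by auto
      have "\<bar>z\<bar> + \<delta> \<le> real n" using R z n_2 by force
      from grid_point_change[OF \<delta> sub n_1 this sgn]
      show "\<exists>i. i \<in> Idx \<and> \<bar>?L ! i - z\<bar> < \<delta>" unfolding Idx_def by blast
    qed
    then obtain ind where ind: "\<And>z. z \<in> Z \<Longrightarrow> ind z \<in> Idx \<and> \<bar>?L ! ind z - z\<bar> < \<delta>" by metis
    have inj: "inj_on ind Z"
    proof (rule inj_onI)
      fix z z' assume zz: "z \<in> Z" "z' \<in> Z" "ind z = ind z'"
      show "z = z'"
      proof (rule ccontr)
        assume "z \<noteq> z'"
        then have "\<rho> \<le> \<bar>z - z'\<bar>" using sep zz by auto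
        moreover have "\<bar>?L ! ind z - z\<bar> < \<delta>" "\<bar>?L ! ind z - z'\<bar> < \<delta>" using ind[OF zz(1)] ind[OF zz(2)] zz(3) by auto
        moreover have "\<delta> \<le> \<rho> / 2" unfolding \<delta>_def by simp
        moreover have "\<bar>z - z'\<bar> \<le> \<bar>?L ! ind z - z\<bar> + \<bar>?L ! ind z - z'\<bar>"
          using abs_triangle_ineq[of "z - ?L ! ind z" "?L ! ind z - z'"] by (simp add: abs_minus_commute)
        ultimately show False by linarith
      qed
    qed
    have "finite Idx" unfolding Idx_def by (rule finite_subset[of _ "{..<length ?L}"]) auto
    moreover have "ind ` Z \<subseteq> Idx" using ind by auto
    ultimately have "card (ind ` Z) \<le> card Idx" by (intro card_mono)
    then have "card Z \<le> sc S ?L a" using card_image[OF inj] unfolding sc_def Idx_def by simp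
    then show ?thesis by simp
  qed
  have "num_zeros S I a = of_nat (card Z)" unfolding num_zeros_eq Z_def[symmetric] using finZ by simp
  also have "\<dots> \<le> liminf (\<lambda>n. of_nat (sc S (grid I n) a))"
    by (rule Liminf_bounded) (use ev in \<open>auto simp: eventually_sequentially\<close>)
  finally show ?thesis .
qed



lemma NN_finite_null: "finite A \<Longrightarrow> emeasure NN A = 0"
proof -
  assume fin: "finite A"
  have "A \<in> sets lborel" using finite_imp_null_set_lborel[OF fin] by (rule null_setsD2)
  then have "A \<in> sets borel" by simp
  then have "emeasure NN A = (\<integral>\<^sup>+ x. ennreal (std_normal_density x) * indicator A x \<partial>lborel)"
    by (intro emeasure_density) auto
  also have "\<dots> = 0" by (rule nn_integral_null_set[OF finite_imp_null_set_lborel[OF fin]])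
  finally show ?thesis .
qed

lemma point_null:
  assumes fin: "finite S" and ne: "S \<noteq> {}" and p: "p > 0"
  shows "emeasure (coeff_space S) {a \<in> space (coeff_space S). fpoly S a p = 0} = 0"
proof -
  define c where "c = sqrt (\<Sum>e\<in>S. (p ^ e)^2)"
  have spos: "(\<Sum>e\<in>S. (p ^ e)^2) > 0" using fin ne p by (intro sum_pos) auto
  then have c: "c > 0" unfolding c_def by simp
  define w where "w e = p ^ e / c" for e
  have w: "(\<Sum>e\<in>S. (w e)^2) = 1"
  proof -
    have "(\<Sum>e\<in>S. (w e)^2) = (\<Sum>e\<in>S. (p ^ e)^2) / c^2"
      unfolding w_def by (simp add: power_divide sum_divide_distrib)
    also have "c^2 = (\<Sum>e\<in>S. (p ^ e)^2)" unfolding c_def by (simp add: sum_nonneg)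
    finally show ?thesis using spos by simp
  qed
  let ?W = "\<lambda>a. \<Sum>e\<in>S. w e * a e"
  have D: "distributed (coeff_space S) lborel ?W std_normal_density" by (rule wsum_distributed[OF fin w])
  have Wm: "?W \<in> measurable (coeff_space S) lborel" using distributed_measurable[OF D] .
  have eq: "fpoly S a p = c * ?W a" for a
    unfolding fpoly_def w_def using c by (simp add: sum_distrib_left mult.commute)
  have "{a \<in> space (coeff_space S). fpoly S a p = 0} = ?W -` {0} \<inter> space (coeff_space S)"
    using c by (auto simp: eq)
  also have "emeasure (coeff_space S) \<dots> = emeasure (distr (coeff_space S) lborel ?W) {0}"
    by (rule emeasure_distr[symmetric, OF Wm]) simp
  also have "\<dots> = emeasure NN {0}" using distributed_distr_eq_density[OF D] by simp
  also have "\<dots> = 0" by (rule NN_finite_null) simp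
  finally show ?thesis .
qed

lemma AE_grid_nz:
  assumes fin: "finite S" and ne: "S \<noteq> {}" and L: "set L \<subseteq> {0<..}"
  shows "AE a in coeff_space S. \<forall>x\<in>set L. fpoly S a x \<noteq> 0"
proof (rule AE_finite_allI)
  fix x assume "x \<in> set L"
  then have x: "x > 0" using L by auto
  show "AE a in coeff_space S. fpoly S a x \<noteq> 0"
  proof (rule AE_I')
    show "{a \<in> space (coeff_space S). fpoly S a x = 0} \<in> null_sets (coeff_space S)"
      using point_null[OF fin ne x] by (auto intro!: null_setsI)
  qed auto
qed simp

lemma sc_integral:
  "(\<integral>\<^sup>+ a. of_nat (sc S L a) \<partial>coeff_space S) = (\<Sum>i<length L - 1. emeasure (coeff_space S) (Ev S (L!i) (L!Suc i)))"
proof -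
  have "(\<integral>\<^sup>+ a. of_nat (sc S L a) \<partial>coeff_space S) = (\<integral>\<^sup>+ a. (\<Sum>i<length L - 1. indicator (Ev S (L!i) (L!Suc i)) a) \<partial>coeff_space S)"
  proof (rule nn_integral_cong)
    fix a assume a: "a \<in> space (coeff_space S)"
    let ?Q = "\<lambda>i. (0 < fpoly S a (L!i)) \<noteq> (0 < fpoly S a (L ! Suc i))"
    have "{i. Suc i < length L \<and> ?Q i} = {i\<in>{..<length L - 1}. ?Q i}" by auto
    then have sc_eq: "sc S L a = (\<Sum>i<length L - 1. if ?Q i then 1 else 0)"
      unfolding sc_def by (simp add: sum.inter_filter[symmetric])
    show "of_nat (sc S L a) = (\<Sum>i<length L - 1. indicator (Ev S (L!i) (L!Suc i)) a :: ennreal)"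
      unfolding sc_eq of_nat_sum by (intro sum.cong refl) (auto simp: Ev_def indicator_def a)
  qed
  also have "\<dots> = (\<Sum>i<length L - 1. emeasure (coeff_space S) (Ev S (L!i) (L!Suc i)))"
    by (subst nn_integral_sum) auto
  finally show ?thesis .
qed

lemma fder_meas[measurable]: "(\<lambda>a. fder S a x) \<in> borel_measurable (coeff_space S)"
  unfolding fder_def using lin_meas[of "\<lambda>e. e" S S "\<lambda>e. of_nat e * x ^ (e - 1)"]
  by (simp add: mult.commute)

lemma x_der_pow: "(x::real) * (of_nat e * x ^ (e - 1)) = of_nat e * x ^ e"
  by (cases e) auto

lemma section_finite:
  assumes fin: "finite S" and e0: "e0 \<in> S"
  shows "finite {c. \<exists>x>0. fpoly S (r(e0:=c)) x = 0 \<and> fder S (r(e0:=c)) x = 0}"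
proof -
  define R where "R = S - {e0}"
  have SR: "S = insert e0 R" "e0 \<notin> R" "finite R" using e0 fin by (auto simp: R_def)
  define g where "g x = (\<Sum>e\<in>R. r e * x ^ e)" for x :: real
  define g' where "g' x = (\<Sum>e\<in>R. r e * (of_nat e * x ^ (e - 1)))" for x :: real
  have fp: "fpoly S (r(e0:=c)) x = c * x ^ e0 + g x" for c x
  proof -
    have "fpoly S (r(e0:=c)) x = c * x ^ e0 + (\<Sum>e\<in>R. (r(e0:=c)) e * x ^ e)"
      unfolding fpoly_def SR(1) using SR by (simp add: sum.insert)
    also have "(\<Sum>e\<in>R. (r(e0:=c)) e * x ^ e) = g x" unfolding g_def
      using SR(2) by (intro sum.cong) auto
    finally show ?thesis .
  qed
  have fd: "fder S (r(e0:=c)) x = c * (of_nat e0 * x ^ (e0 - 1)) + g' x" for c x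
  proof -
    have "fder S (r(e0:=c)) x = c * (of_nat e0 * x ^ (e0 - 1)) + (\<Sum>e\<in>R. (r(e0:=c)) e * (of_nat e * x ^ (e - 1)))"
      unfolding fder_def SR(1) using SR by (simp add: sum.insert)
    also have "(\<Sum>e\<in>R. (r(e0:=c)) e * (of_nat e * x ^ (e - 1))) = g' x" unfolding g'_def
      using SR(2) by (intro sum.cong) auto
    finally show ?thesis .
  qed
  define Q where "Q = (\<Sum>e\<in>R. monom (r e * (of_nat e - of_nat e0)) e)"
  have pQ: "poly Q x = x * g' x - of_nat e0 * g x" for x
  proof -
    have "poly Q x = (\<Sum>e\<in>R. r e * (of_nat e - of_nat e0) * x ^ e)"
      unfolding Q_def by (simp add: poly_sum poly_monom)
    also have "\<dots> = (\<Sum>e\<in>R. x * (r e * (of_nat e * x ^ (e - 1))) - of_nat e0 * (r e * x ^ e))"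
    proof (intro sum.cong refl)
      fix e
      have "x * (r e * (of_nat e * x ^ (e - 1))) = r e * (x * (of_nat e * x ^ (e - 1)))" by (rule mult.left_commute)
      also have "\<dots> = r e * (of_nat e * x ^ e)" by (simp only: x_der_pow)
      finally have h: "x * (r e * (of_nat e * x ^ (e - 1))) = r e * (of_nat e * x ^ e)" .
      show "r e * (of_nat e - of_nat e0) * x ^ e = x * (r e * (of_nat e * x ^ (e - 1))) - of_nat e0 * (r e * x ^ e)"
        unfolding h by (simp add: algebra_simps)
    qed
    also have "\<dots> = x * g' x - of_nat e0 * g x"
      unfolding g_def g'_def by (simp add: sum_subtractf sum_distrib_left)
    finally show ?thesis .
  qed
  have key: "poly Q x = 0 \<and> c = - g x / x ^ e0"
    if x: "x > 0" and f0: "fpoly S (r(e0:=c)) x = 0" and d0: "fder S (r(e0:=c)) x = 0" for c x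
  proof
    have a: "c * x ^ e0 + g x = 0" using f0 fp by simp
    have b: "c * (of_nat e0 * x ^ (e0 - 1)) + g' x = 0" using d0 fd by simp
    have hh: "x * (c * (of_nat e0 * x ^ (e0 - 1))) = c * (of_nat e0 * x ^ e0)"
      using x_der_pow[of x e0] by (metis mult.left_commute)
    have b': "g' x = - (c * (of_nat e0 * x ^ (e0 - 1)))" using b by linarith
    have "x * g' x = - (x * (c * (of_nat e0 * x ^ (e0 - 1))))" unfolding b' by simp
    also have "\<dots> = - c * (of_nat e0 * x ^ e0)" by (simp only: hh mult_minus_left)
    finally have "x * g' x = - c * (of_nat e0 * x ^ e0)" .
    moreover have "of_nat e0 * g x = - c * (of_nat e0 * x ^ e0)"
    proof -
      have "g x = - (c * x ^ e0)" using a by linarith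
      then show ?thesis by (simp add: algebra_simps)
    qed
    ultimately show "poly Q x = 0" unfolding pQ by simp
    have "x ^ e0 > 0" using x by simp
    moreover have "g x = - (c * x ^ e0)" using a by linarith
    ultimately show "c = - g x / x ^ e0" using x by simp
  qed
  show ?thesis
  proof (cases "Q = 0")
    case False
    have "{c. \<exists>x>0. fpoly S (r(e0:=c)) x = 0 \<and> fder S (r(e0:=c)) x = 0}
        \<subseteq> (\<lambda>x. - g x / x ^ e0) ` {x. poly Q x = 0}"
      using key by blast
    moreover have "finite {x. poly Q x = 0}" using poly_roots_finite[OF False] .
    ultimately show ?thesis by (rule finite_subset[OF _ finite_imageI])
  next
    case True
    have r0: "r e = 0" if "e \<in> R" for e
    proof -
      have "coeff Q e = (\<Sum>e'\<in>R. if e' = e then r e' * (of_nat e' - of_nat e0) else 0)"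
        unfolding Q_def by (simp add: coeff_sum)
      also have "\<dots> = r e * (of_nat e - of_nat e0)" using SR(3) that by (simp add: sum.delta)
      finally have "r e * (of_nat e - of_nat e0) = 0" using True by simp
      moreover have "e \<noteq> e0" using that SR(2) by auto
      ultimately show ?thesis by simp
    qed
    have g0: "g x = 0" for x unfolding g_def using r0 by simp
    have "{c. \<exists>x>0. fpoly S (r(e0:=c)) x = 0 \<and> fder S (r(e0:=c)) x = 0} \<subseteq> {0}"
      using key g0 by auto
    then show ?thesis by (rule finite_subset) simp
  qed
qed

lemma fpoly_isCont: "isCont (fpoly S a) x"
  by (rule DERIV_isCont[OF fpoly_deriv])

lemma fder_isCont: "isCont (fder S a) x"
  unfolding fder_def[abs_def] by (intro continuous_intros)

lemma near_zero_rat: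
  fixes f :: "real \<Rightarrow> real"
  assumes ab: "\<alpha> < \<beta>" and x: "x \<in> {\<alpha>..\<beta>}" and f: "isCont f x" "f x = 0" and g: "isCont g x" "g x = 0"
    and e: "\<epsilon> > 0"
  shows "\<exists>q\<in>\<rat> \<inter> {\<alpha>..\<beta>}. \<bar>f q\<bar> < \<epsilon> \<and> \<bar>g q\<bar> < \<epsilon>"
proof -
  obtain d1 where d1: "d1 > 0" "\<forall>y. dist y x < d1 \<longrightarrow> dist (f y) (f x) < \<epsilon>"
    using f(1) e unfolding continuous_at_eps_delta by blast
  obtain d2 where d2: "d2 > 0" "\<forall>y. dist y x < d2 \<longrightarrow> dist (g y) (g x) < \<epsilon>"
    using g(1) e unfolding continuous_at_eps_delta by blast
  define d where "d = min d1 d2"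
  have d: "d > 0" using d1 d2 by (simp add: d_def)
  obtain q where q: "q \<in> \<rat>" "q \<in> {\<alpha>..\<beta>}" "\<bar>q - x\<bar> < d"
  proof (cases "x < \<beta>")
    case True
    then have "x < min (x + d) \<beta>" using d by simp
    from Rats_dense_in_real[OF this] obtain q where "q \<in> \<rat>" "x < q" "q < min (x + d) \<beta>" by blast
    then show ?thesis using x by (intro that[of q]) auto
  next
    case False
    then have "x = \<beta>" using x by simp
    then have "max (x - d) \<alpha> < x" using d ab by simp
    from Rats_dense_in_real[OF this] obtain q where "q \<in> \<rat>" "max (x - d) \<alpha> < q" "q < x" by blast
    then show ?thesis using x by (intro that[of q]) auto
  qed
  have "dist q x < d1" "dist q x < d2" using q(3) by (auto simp: dist_real_def d_def)
  then have "\<bar>f q\<bar> < \<epsilon>" "\<bar>g q\<bar> < \<epsilon>" using d1(2) d2(2) f(2) g(2) by (auto simp: dist_real_def)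
  then show ?thesis using q by blast
qed

lemma double_root_char:
  fixes \<alpha> \<beta> :: real
  assumes ab: "\<alpha> < \<beta>"
  shows "(\<exists>x\<in>{\<alpha>..\<beta>}. fpoly S a x = 0 \<and> fder S a x = 0) \<longleftrightarrow>
    (\<forall>k::nat. \<exists>q\<in>\<rat> \<inter> {\<alpha>..\<beta>}. \<bar>fpoly S a q\<bar> < inverse (real (Suc k)) \<and> \<bar>fder S a q\<bar> < inverse (real (Suc k)))"
proof
  assume "\<exists>x\<in>{\<alpha>..\<beta>}. fpoly S a x = 0 \<and> fder S a x = 0"
  then obtain x where x: "x \<in> {\<alpha>..\<beta>}" "fpoly S a x = 0" "fder S a x = 0" by blast
  show "\<forall>k::nat. \<exists>q\<in>\<rat> \<inter> {\<alpha>..\<beta>}. \<bar>fpoly S a q\<bar> < inverse (real (Suc k)) \<and> \<bar>fder S a q\<bar> < inverse (real (Suc k))"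
    using near_zero_rat[OF ab x(1) fpoly_isCont x(2) fder_isCont x(3)] by simp
next
  assume A: "\<forall>k::nat. \<exists>q\<in>\<rat> \<inter> {\<alpha>..\<beta>}. \<bar>fpoly S a q\<bar> < inverse (real (Suc k)) \<and> \<bar>fder S a q\<bar> < inverse (real (Suc k))"
  then obtain q where q: "\<And>k. q k \<in> {\<alpha>..\<beta>} \<and> \<bar>fpoly S a (q k)\<bar> < inverse (real (Suc k)) \<and> \<bar>fder S a (q k)\<bar> < inverse (real (Suc k))"
    by (metis IntD2)
  have "seq_compact {\<alpha>..\<beta>}" by (rule compact_imp_seq_compact) simp
  then obtain l r where lr: "l \<in> {\<alpha>..\<beta>}" "strict_mono r" "(q \<circ> r) \<longlonglongrightarrow> l"
    using q by (metis seq_compactE)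
  have qr: "(\<lambda>k. q (r k)) \<longlonglongrightarrow> l" using lr(3) by (simp add: o_def)
  have inv: "inverse (real (Suc (r k))) \<le> inverse (real (Suc k))" for k
    using seq_suble[OF lr(2), of k] by (simp add: le_imp_inverse_le)
  have lim0: "(\<lambda>k. F (q (r k))) \<longlonglongrightarrow> 0"
    if F: "\<And>k. \<bar>F (q k)\<bar> < inverse (real (Suc k))" for F :: "real \<Rightarrow> real"
  proof (rule Lim_null_comparison[OF _ LIMSEQ_inverse_real_of_nat])
    show "\<forall>\<^sub>F k in sequentially. norm (F (q (r k))) \<le> inverse (real (Suc k))"
    proof (rule always_eventually, rule allI)
      fix k
      have "\<bar>F (q (r k))\<bar> \<le> inverse (real (Suc (r k)))" using F[of "r k"] by simp
      also have "\<dots> \<le> inverse (real (Suc k))" by (rule inv)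
      finally show "norm (F (q (r k))) \<le> inverse (real (Suc k))" by simp
    qed
  qed
  have "fpoly S a l = 0"
    using LIMSEQ_unique[OF isCont_tendsto_compose[OF fpoly_isCont qr] lim0] q by auto
  moreover have "fder S a l = 0"
    using LIMSEQ_unique[OF isCont_tendsto_compose[OF fder_isCont qr] lim0] q by auto
  ultimately show "\<exists>x\<in>{\<alpha>..\<beta>}. fpoly S a x = 0 \<and> fder S a x = 0" using lr(1) by blast
qed

lemma bad_null:
  fixes \<alpha> \<beta> :: real
  assumes fin: "finite S" and ne: "S \<noteq> {}" and ab: "0 < \<alpha>" "\<alpha> < \<beta>"
  shows "{a\<in>space (coeff_space S). \<exists>x\<in>{\<alpha>..\<beta>}. fpoly S a x = 0 \<and> fder S a x = 0} \<in> null_sets (coeff_space S)"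
proof -
  define B where "B = {a\<in>space (coeff_space S). \<forall>k::nat. \<exists>q\<in>\<rat> \<inter> {\<alpha>..\<beta>}.
      \<bar>fpoly S a q\<bar> < inverse (real (Suc k)) \<and> \<bar>fder S a q\<bar> < inverse (real (Suc k))}"
  have Beq: "{a\<in>space (coeff_space S). \<exists>x\<in>{\<alpha>..\<beta>}. fpoly S a x = 0 \<and> fder S a x = 0} = B"
    unfolding B_def using double_root_char[OF ab(2)] by blast
  define P where "P k q = {a\<in>space (coeff_space S). \<bar>fpoly S a q\<bar> < inverse (real (Suc k)) \<and> \<bar>fder S a q\<bar> < inverse (real (Suc k))}" for k q
  have Pm: "P k q \<in> sets (coeff_space S)" for k q unfolding P_def by measurable
  have cK: "countable (\<rat> \<inter> {\<alpha>..\<beta>})" using countable_rat by (rule countable_subset[rotated]) auto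
  have "B = (\<Inter>k\<in>UNIV. \<Union>q\<in>\<rat> \<inter> {\<alpha>..\<beta>}. P k q)"
    unfolding B_def P_def by auto
  also have "\<dots> \<in> sets (coeff_space S)"
    using Pm cK by (intro sets.countable_INT sets.countable_UN'') auto
  finally have Bm: "B \<in> sets (coeff_space S)" .
  obtain e0 where e0: "e0 \<in> S" using ne by blast
  define R where "R = S - {e0}"
  have SR: "insert e0 R = S" using e0 by (auto simp: R_def)
  let ?\<Phi> = "\<lambda>(x::real, X::nat \<Rightarrow> real). X(e0 := x)"
  let ?M = "NN \<Otimes>\<^sub>M coeff_space R"
  have D: "distr ?M (coeff_space S) ?\<Phi> = coeff_space S"
    using distr_pair_PiM_eq_PiM[of R "\<lambda>_. NN" e0] prob_NN
    unfolding coeff_space_def SR by simp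
  have \<Phi>m: "?\<Phi> \<in> measurable ?M (coeff_space S)"
  proof -
    have "(\<lambda>p. (\<lambda>(f, y). f(e0 := y)) (snd p, fst p)) \<in> measurable ?M (PiM (insert e0 R) (\<lambda>_. NN))"
      unfolding coeff_space_def by measurable
    then show ?thesis unfolding coeff_space_def SR by (simp add: case_prod_beta)
  qed
  interpret PS: pair_sigma_finite NN "coeff_space R"
    by (intro pair_sigma_finite.intro prob_space_imp_sigma_finite prob_NN prob_coeff)
  have "emeasure (coeff_space S) B = emeasure (distr ?M (coeff_space S) ?\<Phi>) B" using D by simp
  also have "\<dots> = emeasure ?M (?\<Phi> -` B \<inter> space ?M)" by (rule emeasure_distr[OF \<Phi>m Bm])
  also have "\<dots> = (\<integral>\<^sup>+ r. emeasure NN ((\<lambda>c. (c, r)) -` (?\<Phi> -` B \<inter> space ?M)) \<partial>coeff_space R)"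
    by (rule PS.emeasure_pair_measure_alt2) (use \<Phi>m Bm in measurable)
  also have "\<dots> = (\<integral>\<^sup>+ r. 0 \<partial>coeff_space R)"
  proof (rule nn_integral_cong)
    fix r
    have "(\<lambda>c. (c, r)) -` (?\<Phi> -` B \<inter> space ?M) \<subseteq> {c. \<exists>x>0. fpoly S (r(e0:=c)) x = 0 \<and> fder S (r(e0:=c)) x = 0}"
    proof
      fix c assume "c \<in> (\<lambda>c. (c, r)) -` (?\<Phi> -` B \<inter> space ?M)"
      then have "r(e0 := c) \<in> B" by simp
      then obtain x where x: "x \<in> {\<alpha>..\<beta>}" "fpoly S (r(e0:=c)) x = 0" "fder S (r(e0:=c)) x = 0"
        unfolding Beq[symmetric] by blast
      then have "x > 0" using ab by auto
      then show "c \<in> {c. \<exists>x>0. fpoly S (r(e0:=c)) x = 0 \<and> fder S (r(e0:=c)) x = 0}"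
        using x by blast
    qed
    then have "finite ((\<lambda>c. (c, r)) -` (?\<Phi> -` B \<inter> space ?M))"
      by (rule finite_subset[OF _ section_finite[OF fin e0]])
    then show "emeasure NN ((\<lambda>c. (c, r)) -` (?\<Phi> -` B \<inter> space ?M)) = 0"
      by (rule NN_finite_null)
  qed
  also have "\<dots> = 0" by simp
  finally show ?thesis unfolding Beq using Bm by (intro null_setsI)
qed

lemma AE_good:
  assumes fin: "finite S" and ne: "S \<noteq> {}"
  shows "AE a in coeff_space S. \<forall>x>0. \<not> (fpoly S a x = 0 \<and> fder S a x = 0)"
proof (rule AE_I')
  define Bad where "Bad m = {a\<in>space (coeff_space S). \<exists>x\<in>{1 / (real m + 2)..real m + 2}. fpoly S a x = 0 \<and> fder S a x = 0}" for m :: nat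
  have "Bad m \<in> null_sets (coeff_space S)" for m
  proof -
    have "1 / (real m + 2) < 1" by simp
    also have "1 < real m + 2" by simp
    finally have lt: "1 / (real m + 2) < real m + 2" .
    show ?thesis unfolding Bad_def by (rule bad_null[OF fin ne _ lt]) simp
  qed
  then show "(\<Union>m. Bad m) \<in> null_sets (coeff_space S)" by blast
  show "{a \<in> space (coeff_space S). \<not> (\<forall>x>0. \<not> (fpoly S a x = 0 \<and> fder S a x = 0))} \<subseteq> (\<Union>m. Bad m)"
  proof
    fix a assume "a \<in> {a \<in> space (coeff_space S). \<not> (\<forall>x>0. \<not> (fpoly S a x = 0 \<and> fder S a x = 0))}"
    then obtain x where a: "a \<in> space (coeff_space S)" and x: "x > 0" "fpoly S a x = 0" "fder S a x = 0" by blast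
    define m where "m = nat \<lceil>x + 1 / x\<rceil>"
    have m1: "x + 1 / x \<le> real m" unfolding m_def by linarith
    have ix: "1 / x > 0" using x by simp
    have "x \<le> real m + 2" using m1 ix by linarith
    moreover have "1 / (real m + 2) \<le> x"
    proof -
      have "1 / x \<le> real m + 2" using m1 x by linarith
      then show ?thesis using x by (simp add: divide_le_eq mult.commute)
    qed
    ultimately have "a \<in> Bad m" unfolding Bad_def using a x by auto
    then show "a \<in> (\<Union>m. Bad m)" by blast
  qed
qed

lemma sc_sum: "(of_nat (sc S L a) :: ennreal) =
   (\<Sum>i<length L - 1. if (0 < fpoly S a (L!i)) \<noteq> (0 < fpoly S a (L!Suc i)) then 1 else 0)"
proof -
  let ?Q = "\<lambda>i. (0 < fpoly S a (L!i)) \<noteq> (0 < fpoly S a (L ! Suc i))"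
  have "{i. Suc i < length L \<and> ?Q i} = {i\<in>{..<length L - 1}. ?Q i}" by auto
  then have sc_eq: "sc S L a = (\<Sum>i<length L - 1. if ?Q i then 1 else 0)"
    unfolding sc_def by (simp add: sum.inter_filter[symmetric])
  show ?thesis unfolding sc_eq of_nat_sum by (intro sum.cong refl) auto
qed

lemma sc_meas: "(\<lambda>a. (of_nat (sc S L a) :: ennreal)) \<in> borel_measurable (coeff_space S)"
  unfolding sc_sum by measurable

lemma main_ineq:
  fixes S1 S2 :: "nat set" and I :: "real set"
  assumes fin1: "finite S1" and ne1: "S1 \<noteq> {}" and fin2: "finite S2" and ne2: "S2 \<noteq> {}"
    and cf: "collision_free S1 S2"
    and iv: "is_interval I" and op: "open I" and pos: "I \<subseteq> {0<..}"
  shows "expected_zeros (sumset S1 S2) I \<le> expected_zeros S1 I + expected_zeros S2 I"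
proof -
  let ?T = "sumset S1 S2"
  have T: "?T = (\<lambda>(e1,e2). e1 + e2) ` (S1 \<times> S2)" by (auto simp: sumset_def)
  have "card ((\<lambda>(e1,e2). e1 + e2) ` (S1 \<times> S2)) = card (S1 \<times> S2)"
    using cf unfolding collision_free_def T by (simp add: card_cartesian_product)
  then have inj: "inj_on (\<lambda>(e1,e2). e1 + e2) (S1 \<times> S2)"
    using fin1 fin2 by (intro eq_card_imp_inj_on) auto
  have finT: "finite ?T" unfolding T using fin1 fin2 by simp
  have neT: "?T \<noteq> {}" unfolding T using ne1 ne2 by auto
  have gpos: "set (grid I n) \<subseteq> {0<..}" for n using pos by (auto simp: set_grid)
  have gI: "set (grid I n) \<subseteq> I" for n by (auto simp: set_grid)
  have lower: "(\<integral>\<^sup>+ a. of_nat (sc S (grid I n) a) \<partial>coeff_space S) \<le> expected_zeros S I"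
    if "finite S" "S \<noteq> {}" for S n
    unfolding expected_zeros_def
  proof (rule nn_integral_mono_AE)
    show "AE a in coeff_space S. of_nat (sc S (grid I n) a) \<le> num_zeros S I a"
      using AE_grid_nz[OF that gpos[of n]]
      by eventually_elim (rule sc_le_zeros[OF sorted_grid gI iv])
  qed
  have step: "(\<integral>\<^sup>+ a. of_nat (sc ?T (grid I n) a) \<partial>coeff_space ?T) \<le> expected_zeros S1 I + expected_zeros S2 I" for n
  proof -
    let ?L = "grid I n"
    have "(\<integral>\<^sup>+ a. of_nat (sc ?T ?L a) \<partial>coeff_space ?T) = (\<Sum>i<length ?L - 1. emeasure (coeff_space ?T) (Ev ?T (?L!i) (?L!Suc i)))"
      by (rule sc_integral)
    also have "\<dots> \<le> (\<Sum>i<length ?L - 1. emeasure (coeff_space S1) (Ev S1 (?L!i) (?L!Suc i)) + emeasure (coeff_space S2) (Ev S2 (?L!i) (?L!Suc i)))"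
    proof (rule sum_mono)
      fix i assume "i \<in> {..<length ?L - 1}"
      then have "i < length ?L" "Suc i < length ?L" by auto
      then have "?L!i \<in> set ?L" "?L!Suc i \<in> set ?L" by (auto intro!: nth_mem)
      then have "?L!i > 0" "?L!Suc i > 0" using gpos[of n] by auto
      then show "emeasure (coeff_space ?T) (Ev ?T (?L!i) (?L!Suc i)) \<le> emeasure (coeff_space S1) (Ev S1 (?L!i) (?L!Suc i)) + emeasure (coeff_space S2) (Ev S2 (?L!i) (?L!Suc i))"
        by (rule coupling[OF fin1 ne1 fin2 ne2 inj])
    qed
    also have "\<dots> = (\<integral>\<^sup>+ a. of_nat (sc S1 ?L a) \<partial>coeff_space S1) + (\<integral>\<^sup>+ a. of_nat (sc S2 ?L a) \<partial>coeff_space S2)"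
      by (simp add: sum.distrib sc_integral)
    also have "\<dots> \<le> expected_zeros S1 I + expected_zeros S2 I"
      by (intro add_mono lower fin1 ne1 fin2 ne2)
    finally show ?thesis .
  qed
  have "expected_zeros ?T I \<le> (\<integral>\<^sup>+ a. liminf (\<lambda>n. of_nat (sc ?T (grid I n) a)) \<partial>coeff_space ?T)"
    unfolding expected_zeros_def
  proof (rule nn_integral_mono_AE)
    show "AE a in coeff_space ?T. num_zeros ?T I a \<le> liminf (\<lambda>n. of_nat (sc ?T (grid I n) a))"
      using AE_good[OF finT neT] by eventually_elim (rule zeros_le_liminf[OF finT op pos])
  qed
  also have "\<dots> \<le> liminf (\<lambda>n. \<integral>\<^sup>+ a. of_nat (sc ?T (grid I n) a) \<partial>coeff_space ?T)"
    by (rule nn_integral_liminf) (rule sc_meas)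
  also have "\<dots> \<le> liminf (\<lambda>n. expected_zeros S1 I + expected_zeros S2 I)"
    by (rule Liminf_mono) (use step in auto)
  also have "\<dots> = expected_zeros S1 I + expected_zeros S2 I"
    by (rule Liminf_const) simp
  finally show ?thesis .
qed


theorem lemma3p8:
  fixes S1 S2 :: "nat set" and I :: "real set"
  assumes "finite S1" "S1 \<noteq> {}" "finite S2" "S2 \<noteq> {}"
    and "collision_free S1 S2"
    and "is_interval I" "open I" "I \<subseteq> {0<..}"
  shows "expected_zeros (sumset S1 S2) I \<le> expected_zeros S1 I + expected_zeros S2 I"
  by (rule main_ineq[OF assms])

end
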